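(* Let $a,b,c\in\mathbb{C}^*$ satisfy $a,b,c,a/b,a/c,b/c\notin q^{\mathbb{Z}}$ and $$q^{\mathbb{Z}}a\cup q^{\mathbb{Z}}b\cup q^{\mathbb{Z}}\tfrac{aq}{c}\cup q^{\mathbb{Z}}\tfrac{bq}{c}=q^{\mathbb{Z}}a\cup(-q^{\mathbb{Z}}a)\cup q^{\mathbb{Z}+1/2}a\cup(-q^{\mathbb{Z}+1/2}a).$$ Let $A,B,C,D\in\mathbb{C}$ and $n,m,l,k,N,M,L,K\in\mathbb{Z}$ be such that $$Az^{n/2}\theta_q(q^Naz)+Bz^{m/2}\theta_q(-q^Maz)+Cz^{l/2}\theta_q(q^Lq^{1/2}az)+Dz^{k/2}\theta_q(-q^Kq^{1/2}az)=0$$ identically (as multivalued meromorphic functions of $z\in\mathbb{C}^*$, with $z^{j/2}$ a determination of $e^{\frac{j}{2}\log z}$). Then $A=B=C=D=0$.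
   Context: $q\in\mathbb{C}$ with $0<|q|<1$; fix $\tau$ with $q=e^{-2\pi i\tau}$ and put $q^y:=e^{-2\pi i\tau y}$ (so $q^{1/2}=e^{-\pi i\tau}$); $q^X=\{q^x:x\in X\}$. $(x;q)_\infty=\prod_{j\ge0}(1-xq^j)$ and $\theta_q(z)=(q;q)_\infty(z;q)_\infty(q/z;q)_\infty$ is the Jacobi theta function, meromorphic (holomorphic) on $\mathbb{C}^*$, with $\theta_q(qz)=-z^{-1}\theta_q(z)$. *)

theory Defs
  imports "HOL-Analysis.Analysis"
begin

definition qpoch_inf :: "complex \<Rightarrow> complex \<Rightarrow> complex" where
  "qpoch_inf x q = (\<Prod>j. (1 - x * q ^ j))"

definition jtheta :: "complex \<Rightarrow> complex \<Rightarrow> complex" where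
  "jtheta q z = qpoch_inf q q * qpoch_inf z q * qpoch_inf (q / z) q"

text \<open>q^y := exp(-2 pi i tau y), for the fixed tau with q = exp(-2 pi i tau).\<close>
definition qpow :: "complex \<Rightarrow> complex \<Rightarrow> complex" where
  "qpow \<tau> y = exp (- 2 * pi * \<i> * \<tau> * y)"

definition qorbit :: "complex \<Rightarrow> complex \<Rightarrow> complex set" where
  "qorbit q x = {q powi n * x | n. True}"

end

theory Submission imports Defs begin


lemma qpoch_conv:
  fixes q x :: complex assumes "norm q < 1"
  shows "convergent_prod (\<lambda>j. 1 - x * q ^ j)"
proof -
  have "summable (\<lambda>j. norm x * norm q ^ j)"
    using assms by (intro summable_mult summable_geometric) auto
  hence "summable (\<lambda>j. norm ((1 - x * q ^ j) - 1))"
    by (simp add: norm_mult norm_power)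
  hence "abs_convergent_prod (\<lambda>j. 1 - x * q ^ j)"
    by (rule summable_imp_abs_convergent_prod)
  thus ?thesis by (rule abs_convergent_prod_imp_convergent_prod)
qed

lemma qpoch_shift:
  fixes q x :: complex assumes "norm q < 1"
  shows "qpoch_inf x q = (1 - x) * qpoch_inf (x * q) q"
proof -
  have h: "(\<lambda>j. 1 - x * q ^ j) has_prod ((\<Prod>k<1. 1 - x * q ^ k) * (\<Prod>k. 1 - x * q ^ (k + 1)))"
    by (rule has_prod_ignore_initial_segment'[OF qpoch_conv[OF assms]])
  have "qpoch_inf x q = (1 - x) * (\<Prod>k. 1 - x * q ^ (k + 1))"
    unfolding qpoch_inf_def using has_prod_unique[OF h] by simp
  also have "(\<lambda>k. 1 - x * q ^ (k + 1)) = (\<lambda>k. 1 - (x * q) * q ^ k)"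
    by (auto simp: algebra_simps)
  finally show ?thesis unfolding qpoch_inf_def by simp
qed

lemma qpoch_nonzero:
  fixes q x :: complex assumes "norm q < 1" "\<And>j. x * q ^ j \<noteq> 1"
  shows "qpoch_inf x q \<noteq> 0"
  unfolding qpoch_inf_def
  by (rule prodinf_nonzero[OF qpoch_conv[OF assms(1)]]) (use assms(2) in auto)

lemma jtheta_q:
  fixes q x :: complex assumes "norm q < 1" "x \<noteq> 0" "q \<noteq> 0"
  shows "jtheta q (q * x) = - jtheta q x / x"
proof -
  have 1: "qpoch_inf x q = (1 - x) * qpoch_inf (q * x) q"
    using qpoch_shift[OF assms(1), of x] by (simp add: mult.commute)
  have 2: "qpoch_inf (q / (q * x)) q = (1 - 1/x) * qpoch_inf (q / x) q"
    using qpoch_shift[OF assms(1), of "1/x"] assms by (simp add: field_simps)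
  show ?thesis unfolding jtheta_def 1 2 using assms
    by (simp add: field_simps)
qed

lemma jtheta_nonzero:
  fixes q :: complex assumes "norm q < 1" "q \<noteq> 0"
  shows "jtheta q (of_real (sqrt (norm q))) \<noteq> 0"
proof -
  define r where "r = sqrt (norm q)"
  have r0: "r > 0" using assms by (simp add: r_def)
  have rr: "r * r = norm q" using r_def by simp
  have r1: "r < 1" using assms r_def by (simp add: real_sqrt_lt_1_iff)
  have a: "qpoch_inf q q \<noteq> 0"
  proof (rule qpoch_nonzero[OF assms(1)])
    fix j
    have "norm (q * q ^ j) = norm q ^ Suc j" by (simp add: norm_mult norm_power)
    also have "\<dots> < 1" using assms by (intro power_Suc_less_one) auto
    finally have "norm (q * q ^ j) < 1" .
    thus "q * q ^ j \<noteq> 1" by auto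
  qed
  have b: "qpoch_inf (of_real r) q \<noteq> 0"
  proof (rule qpoch_nonzero[OF assms(1)])
    fix j
    have "norm (of_real r * q ^ j) = r * norm q ^ j" using r0 by (simp add: norm_mult norm_power)
    also have "\<dots> \<le> r * 1" using r0 assms by (intro mult_left_mono power_le_one) auto
    also have "\<dots> < 1" using r1 by simp
    finally show "of_real r * q ^ j \<noteq> 1" by auto
  qed
  have c: "qpoch_inf (q / of_real r) q \<noteq> 0"
  proof (rule qpoch_nonzero[OF assms(1)])
    fix j
    have "norm (q / of_real r) = r" using r0 rr by (simp add: norm_divide) (simp add: field_simps)
    hence "norm (q / of_real r * q ^ j) = r * norm q ^ j" by (simp only: norm_mult norm_power)
    also have "\<dots> \<le> r * 1" using r0 assms by (intro mult_left_mono power_le_one) auto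
    also have "\<dots> < 1" using r1 by simp
    finally show "q / of_real r * q ^ j \<noteq> 1" by auto
  qed
  show ?thesis using a b c unfolding jtheta_def r_def by simp
qed



lemma poly3:
  fixes c1 c2 c3 c4 x1 x2 x3 x4 a2 a3 a4 b2 b3 b4 :: complex
  shows "(a2*c1 - b2)*(a3*c1 - b3)*(a4*c1-b4)*x1 + (a2*c2 - b2)*(a3*c2 - b3)*(a4*c2-b4)*x2
       + (a2*c3 - b2)*(a3*c3 - b3)*(a4*c3-b4)*x3 + (a2*c4 - b2)*(a3*c4 - b3)*(a4*c4-b4)*x4
   = a2*a3*a4 * (c1^3*x1 + c2^3*x2 + c3^3*x3 + c4^3*x4)
     - (a2*a3*b4 + a2*b3*a4 + b2*a3*a4) * (c1^2*x1 + c2^2*x2 + c3^2*x3 + c4^2*x4)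
     + (a2*b3*b4 + b2*a3*b4 + b2*b3*a4) * (c1*x1 + c2*x2 + c3*x3 + c4*x4)
     - b2*b3*b4 * (x1 + x2 + x3 + x4)"
  by (simp add: algebra_simps power2_eq_square power3_eq_cube)

lemma vand1:
  fixes c1 c2 c3 c4 x1 x2 x3 x4 :: complex
  assumes S: "\<And>j::nat. c1^j*x1 + c2^j*x2 + c3^j*x3 + c4^j*x4 = 0"
    and p2: "c1 = c2 \<Longrightarrow> x1 = 0 \<or> x2 = 0"
    and p3: "c1 = c3 \<Longrightarrow> x1 = 0 \<or> x3 = 0"
    and p4: "c1 = c4 \<Longrightarrow> x1 = 0 \<or> x4 = 0"
  shows "x1 = 0"
proof (rule ccontr)
  assume x1: "x1 \<noteq> 0"
  define a2 where "a2 = (if c2 = c1 then 0 else (1::complex))"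
  define a3 where "a3 = (if c3 = c1 then 0 else (1::complex))"
  define a4 where "a4 = (if c4 = c1 then 0 else (1::complex))"
  define b2 where "b2 = (if c2 = c1 then -1 else c2)"
  define b3 where "b3 = (if c3 = c1 then -1 else c3)"
  define b4 where "b4 = (if c4 = c1 then -1 else c4)"
  have E: "(a2*c1 - b2)*(a3*c1 - b3)*(a4*c1-b4)*x1 + (a2*c2 - b2)*(a3*c2 - b3)*(a4*c2-b4)*x2
       + (a2*c3 - b2)*(a3*c3 - b3)*(a4*c3-b4)*x3 + (a2*c4 - b2)*(a3*c4 - b3)*(a4*c4-b4)*x4 = 0"
    unfolding poly3 using S[of 0] S[of 1] S[of 2] S[of 3] by simp
  have t2: "(a2*c2 - b2)*(a3*c2 - b3)*(a4*c2-b4)*x2 = 0"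
    using p2 x1 by (cases "c2 = c1") (auto simp: a2_def b2_def)
  have t3: "(a2*c3 - b2)*(a3*c3 - b3)*(a4*c3-b4)*x3 = 0"
    using p3 x1 by (cases "c3 = c1") (auto simp: a3_def b3_def)
  have t4: "(a2*c4 - b2)*(a3*c4 - b3)*(a4*c4-b4)*x4 = 0"
    using p4 x1 by (cases "c4 = c1") (auto simp: a4_def b4_def)
  have "(a2*c1 - b2)*(a3*c1 - b3)*(a4*c1-b4) \<noteq> 0"
    by (auto simp: a2_def b2_def a3_def b3_def a4_def b4_def)
  with E t2 t3 t4 x1 show False by simp
qed

lemma vand:
  fixes c1 c2 c3 c4 x1 x2 x3 x4 :: complex
  assumes S: "\<And>j::nat. c1^j*x1 + c2^j*x2 + c3^j*x3 + c4^j*x4 = 0"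
    and p12: "c1 = c2 \<Longrightarrow> x1 = 0 \<or> x2 = 0"
    and p13: "c1 = c3 \<Longrightarrow> x1 = 0 \<or> x3 = 0"
    and p14: "c1 = c4 \<Longrightarrow> x1 = 0 \<or> x4 = 0"
    and p23: "c2 = c3 \<Longrightarrow> x2 = 0 \<or> x3 = 0"
    and p24: "c2 = c4 \<Longrightarrow> x2 = 0 \<or> x4 = 0"
    and p34: "c3 = c4 \<Longrightarrow> x3 = 0 \<or> x4 = 0"
  shows "x1 = 0 \<and> x2 = 0 \<and> x3 = 0 \<and> x4 = 0"
proof (intro conjI)
  show "x1 = 0" by (rule vand1[OF S p12 p13 p14])
  show "x2 = 0"
    by (rule vand1[of c2 x2 c1 x1 c3 x3 c4 x4]) (use S p12 p23 p24 in \<open>auto simp: algebra_simps\<close>)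
  show "x3 = 0"
    by (rule vand1[of c3 x3 c1 x1 c2 x2 c4 x4]) (use S p13 p23 p34 in \<open>auto simp: algebra_simps\<close>)
  show "x4 = 0"
    by (rule vand1[of c4 x4 c1 x1 c2 x2 c3 x3]) (use S p14 p24 p34 in \<open>auto simp: algebra_simps\<close>)
qed

lemma combine:
  fixes G1 G2 G3 G4 :: "complex \<Rightarrow> complex" and c1 c2 c3 c4 e1 e2 e3 e4 t p :: complex
  assumes sum: "\<And>w. G1 w + G2 w + G3 w + G4 w = 0"
    and s1: "\<And>w. G1 (w + t) = c1 * exp (-w) * G1 w"
    and s2: "\<And>w. G2 (w + t) = c2 * exp (-w) * G2 w"
    and s3: "\<And>w. G3 (w + t) = c3 * exp (-w) * G3 w"
    and s4: "\<And>w. G4 (w + t) = c4 * exp (-w) * G4 w"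
    and r1: "\<And>w. G1 (w + p) = e1 * G1 w"
    and r2: "\<And>w. G2 (w + p) = e2 * G2 w"
    and r3: "\<And>w. G3 (w + p) = e3 * G3 w"
    and r4: "\<And>w. G4 (w + p) = e4 * G4 w"
    and p12: "c1 = c2 \<Longrightarrow> (1+e1)*(1+e2) = 0 \<and> (1-e1)*(1-e2) = 0"
    and p13: "c1 = c3 \<Longrightarrow> (1+e1)*(1+e3) = 0 \<and> (1-e1)*(1-e3) = 0"
    and p14: "c1 = c4 \<Longrightarrow> (1+e1)*(1+e4) = 0 \<and> (1-e1)*(1-e4) = 0"
    and p23: "c2 = c3 \<Longrightarrow> (1+e2)*(1+e3) = 0 \<and> (1-e2)*(1-e3) = 0"
    and p24: "c2 = c4 \<Longrightarrow> (1+e2)*(1+e4) = 0 \<and> (1-e2)*(1-e4) = 0"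
    and p34: "c3 = c4 \<Longrightarrow> (1+e3)*(1+e4) = 0 \<and> (1-e3)*(1-e4) = 0"
  shows "G1 w = 0 \<and> G2 w = 0 \<and> G3 w = 0 \<and> G4 w = 0"
proof -
  have S: "c1^j * G1 w + c2^j * G2 w + c3^j * G3 w + c4^j * G4 w = 0" for j w
  proof (induction j arbitrary: w)
    case 0 then show ?case using sum by simp
  next
    case (Suc j)
    have "0 = c1^j * G1 (w+t) + c2^j * G2 (w+t) + c3^j * G3 (w+t) + c4^j * G4 (w+t)"
      using Suc.IH[of "w+t"] by simp
    also have "\<dots> = exp (-w) * (c1^Suc j * G1 w + c2^Suc j * G2 w + c3^Suc j * G3 w + c4^Suc j * G4 w)"
      unfolding s1 s2 s3 s4 by (simp add: algebra_simps)
    finally show ?case by simp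
  qed
  have T: "c1^j * (e1 * G1 w) + c2^j * (e2 * G2 w) + c3^j * (e3 * G3 w) + c4^j * (e4 * G4 w) = 0" for j w
    using S[of j "w+p"] unfolding r1 r2 r3 r4 .
  have P: "c1^j * ((1+e1) * G1 w) + c2^j * ((1+e2) * G2 w) + c3^j * ((1+e3) * G3 w) + c4^j * ((1+e4) * G4 w) = 0" for j
    using S[of j w] T[of j w] by (simp add: algebra_simps)
  have M: "c1^j * ((1-e1) * G1 w) + c2^j * ((1-e2) * G2 w) + c3^j * ((1-e3) * G3 w) + c4^j * ((1-e4) * G4 w) = 0" for j
  proof -
    have "c1^j * ((1-e1) * G1 w) + c2^j * ((1-e2) * G2 w) + c3^j * ((1-e3) * G3 w) + c4^j * ((1-e4) * G4 w)
      = (c1^j * G1 w + c2^j * G2 w + c3^j * G3 w + c4^j * G4 w)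
        - (c1^j * (e1 * G1 w) + c2^j * (e2 * G2 w) + c3^j * (e3 * G3 w) + c4^j * (e4 * G4 w))"
      by (simp add: algebra_simps)
    also have "\<dots> = 0" using S[of j w] T[of j w] by simp
    finally show ?thesis .
  qed
  have VP: "(1+e1) * G1 w = 0 \<and> (1+e2) * G2 w = 0 \<and> (1+e3) * G3 w = 0 \<and> (1+e4) * G4 w = 0"
    by (rule vand[OF P]) (use p12 p13 p14 p23 p24 p34 in \<open>auto simp: mult_eq_0_iff\<close>)
  have VM: "(1-e1) * G1 w = 0 \<and> (1-e2) * G2 w = 0 \<and> (1-e3) * G3 w = 0 \<and> (1-e4) * G4 w = 0"
    by (rule vand[OF M]) (use p12 p13 p14 p23 p24 p34 in \<open>auto simp: mult_eq_0_iff\<close>)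
  have g: "G = ((1+e) * G + (1-e) * G) / 2" for G e :: complex by (simp add: algebra_simps)
  show ?thesis using VP VM g[of "G1 w" e1] g[of "G2 w" e2] g[of "G3 w" e3] g[of "G4 w" e4]
    by auto
qed



lemma Gshift:
  fixes q t \<kappa> A w :: complex and n :: int
  assumes "exp t = q" "norm q < 1" "q \<noteq> 0" "\<kappa> \<noteq> 0"
  shows "A * exp (of_int n / 2 * (w + t)) * jtheta q (\<kappa> * exp (w + t))
       = (- exp (of_int n / 2 * t) / \<kappa>) * exp (-w) * (A * exp (of_int n / 2 * w) * jtheta q (\<kappa> * exp w))"
proof -
  have x: "\<kappa> * exp w \<noteq> 0" using assms by simp
  have h: "\<kappa> * exp (w + t) = q * (\<kappa> * exp w)" using assms by (simp add: exp_add algebra_simps)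
  have j: "jtheta q (\<kappa> * exp (w + t)) = - jtheta q (\<kappa> * exp w) / (\<kappa> * exp w)"
    unfolding h by (rule jtheta_q[OF assms(2) x assms(3)])
  have e: "exp (of_int n / 2 * (w + t)) = exp (of_int n / 2 * w) * exp (of_int n / 2 * t)"
    by (simp add: distrib_left exp_add)
  show ?thesis unfolding j e exp_minus using assms by (simp add: field_simps)
qed

lemma Gper:
  fixes q \<kappa> A w :: complex and n :: int
  shows "A * exp (of_int n / 2 * (w + 2 * of_real pi * \<i>)) * jtheta q (\<kappa> * exp (w + 2 * of_real pi * \<i>))
       = (if even n then 1 else -1) * (A * exp (of_int n / 2 * w) * jtheta q (\<kappa> * exp w))"
proof -
  have e1: "exp (w + 2 * of_real pi * \<i>) = exp w" by (simp add: exp_add)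
  have "exp (of_int n / 2 * (w + 2 * of_real pi * \<i>)) = exp (of_int n / 2 * w) * exp (of_int n * (of_real pi * \<i>))"
    by (simp add: distrib_left exp_add algebra_simps)
  also have "exp (of_int n * (of_real pi * \<i>)) = exp (of_real pi * \<i>) powi n"
    by (rule exp_power_int[symmetric])
  also have "\<dots> = (if even n then 1 else -1)"
    by (simp add: power_int_minus_left)
  finally show ?thesis unfolding e1 by simp
qed

lemma pairE:
  fixes E :: "int \<Rightarrow> complex" and a s s' :: complex
  assumes inj: "\<And>p p'. norm (E p) = norm (E p') \<Longrightarrow> p = p'" and nz: "\<And>p. E p \<noteq> 0"
    and a: "a \<noteq> 0" and s: "s = 1 \<or> s = -1" and s': "s' = 1 \<or> s' = -1"
    and eq: "s * E p / a = s' * E p' / a"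
  shows "p = p' \<and> s = s'"
proof -
  have eq2: "s * E p = s' * E p'" using eq a by (simp add: field_simps)
  hence "norm (s * E p) = norm (s' * E p')" by simp
  hence "norm (E p) = norm (E p')" using s s' by (auto simp: norm_mult)
  hence pp: "p = p'" by (rule inj)
  with eq2 nz[of p] have "s = s'" by simp
  with pp show ?thesis by simp
qed



theorem mainTheorem3:
  fixes q \<tau> a b c A B C D :: complex
    and n m l k N M L K :: int
  assumes hq: "q = exp (- 2 * pi * \<i> * \<tau>)"
    and hq0: "0 < norm q" and hq1: "norm q < 1"
    and ha: "a \<noteq> 0" and hb: "b \<noteq> 0" and hc: "c \<noteq> 0"
    and hgen: "a \<notin> qorbit q 1" "b \<notin> qorbit q 1" "c \<notin> qorbit q 1"
              "a / b \<notin> qorbit q 1" "a / c \<notin> qorbit q 1" "b / c \<notin> qorbit q 1"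
    and hsets: "qorbit q a \<union> qorbit q b \<union> qorbit q (a * q / c) \<union> qorbit q (b * q / c)
              = qorbit q a \<union> uminus ` qorbit q a \<union> qorbit q (qpow \<tau> (1/2) * a)
                \<union> uminus ` qorbit q (qpow \<tau> (1/2) * a)"
    and hid: "\<forall>w::complex. let z = exp w in
                A * exp (of_int n / 2 * w) * jtheta q (q powi N * a * z)
              + B * exp (of_int m / 2 * w) * jtheta q (- (q powi M) * a * z)
              + C * exp (of_int l / 2 * w) * jtheta q (q powi L * qpow \<tau> (1/2) * a * z)
              + D * exp (of_int k / 2 * w) * jtheta q (- (q powi K) * qpow \<tau> (1/2) * a * z) = 0"
  shows "A = 0 \<and> B = 0 \<and> C = 0 \<and> D = 0"
proof -
  define t :: complex where "t = - 2 * pi * \<i> * \<tau>"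
  have et: "exp t = q" using hq t_def by simp
  have q0: "q \<noteq> 0" using hq0 by auto
  define E where "E p = exp (of_int p * (t/2))" for p :: int
  have Eadd: "E p * E p' = E (p + p')" for p p' unfolding E_def of_int_add distrib_right exp_add ..
  have Enz: "E p \<noteq> 0" for p by (simp add: E_def)
  have qpw: "q powi N' = E (2*N')" for N'
  proof -
    have "q powi N' = exp (of_int N' * t)" using et exp_power_int[of t N'] by simp
    thus ?thesis by (simp add: E_def)
  qed
  have u: "qpow \<tau> (1/2) = E 1" by (simp add: qpow_def E_def t_def)
  have Eh: "exp (of_int n' / 2 * t) = E n'" for n' by (simp add: E_def)
  have Ret: "Re (t/2) \<noteq> 0"
  proof
    assume "Re (t/2) = 0"
    hence "Re t = 0" by simp
    hence "norm q = 1" using et by (metis exp_zero norm_exp_eq_Re)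
    with hq1 show False by simp
  qed
  have inj: "p = p'" if "norm (E p) = norm (E p')" for p p'
  proof -
    have "exp (of_int p * Re (t/2)) = exp (of_int p' * Re (t/2))"
      using that by (simp add: E_def norm_exp_eq_Re)
    hence "of_int p * Re (t/2) = of_int p' * Re (t/2)" by simp
    with Ret show ?thesis by simp
  qed
  define \<kappa>1 where "\<kappa>1 = q powi N * a"
  define \<kappa>2 where "\<kappa>2 = - (q powi M) * a"
  define \<kappa>3 where "\<kappa>3 = q powi L * qpow \<tau> (1/2) * a"
  define \<kappa>4 where "\<kappa>4 = - (q powi K) * qpow \<tau> (1/2) * a"
  have k1: "\<kappa>1 \<noteq> 0" and k2: "\<kappa>2 \<noteq> 0" and k3: "\<kappa>3 \<noteq> 0" and k4: "\<kappa>4 \<noteq> 0"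
    unfolding \<kappa>1_def \<kappa>2_def \<kappa>3_def \<kappa>4_def qpw u using ha Enz by auto
  define G1 where "G1 w = A * exp (of_int n / 2 * w) * jtheta q (\<kappa>1 * exp w)" for w
  define G2 where "G2 w = B * exp (of_int m / 2 * w) * jtheta q (\<kappa>2 * exp w)" for w
  define G3 where "G3 w = C * exp (of_int l / 2 * w) * jtheta q (\<kappa>3 * exp w)" for w
  define G4 where "G4 w = D * exp (of_int k / 2 * w) * jtheta q (\<kappa>4 * exp w)" for w
  have sum: "G1 w + G2 w + G3 w + G4 w = 0" for w
    using spec[OF hid, of w] unfolding Let_def G1_def G2_def G3_def G4_def \<kappa>1_def \<kappa>2_def \<kappa>3_def \<kappa>4_def .
  have c1: "- exp (of_int n / 2 * t) / \<kappa>1 = (-1) * E (n - 2*N) / a"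
    unfolding Eh \<kappa>1_def qpw using Eadd[of "n - 2*N" "2*N"] Enz ha by (simp add: field_simps)
  have c2: "- exp (of_int m / 2 * t) / \<kappa>2 = 1 * E (m - 2*M) / a"
    unfolding Eh \<kappa>2_def qpw using Eadd[of "m - 2*M" "2*M"] Enz ha by (simp add: field_simps)
  have c3: "- exp (of_int l / 2 * t) / \<kappa>3 = (-1) * E (l - 2*L - 1) / a"
    unfolding Eh \<kappa>3_def qpw u using Eadd[of "l - 2*L - 1" "2*L"] Eadd[of "l - 1" 1] Enz ha
    by (simp add: field_simps)
  have c4: "- exp (of_int k / 2 * t) / \<kappa>4 = 1 * E (k - 2*K - 1) / a"
    unfolding Eh \<kappa>4_def qpw u using Eadd[of "k - 2*K - 1" "2*K"] Eadd[of "k - 1" 1] Enz ha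
    by (simp add: field_simps)
  note PE = pairE[of E, OF inj Enz ha]
  have all: "G1 w = 0 \<and> G2 w = 0 \<and> G3 w = 0 \<and> G4 w = 0" for w
  proof (rule combine[where ?G1.0 = G1 and ?G2.0 = G2 and ?G3.0 = G3 and ?G4.0 = G4 and t = t and p = "2 * of_real pi * \<i>"
        and ?c1.0 = "- exp (of_int n / 2 * t) / \<kappa>1" and ?c2.0 = "- exp (of_int m / 2 * t) / \<kappa>2"
        and ?c3.0 = "- exp (of_int l / 2 * t) / \<kappa>3" and ?c4.0 = "- exp (of_int k / 2 * t) / \<kappa>4"
        and ?e1.0 = "if even n then 1 else -1" and ?e2.0 = "if even m then 1 else -1"
        and ?e3.0 = "if even l then 1 else -1" and ?e4.0 = "if even k then 1 else -1"])
    show "G1 w + G2 w + G3 w + G4 w = 0" for w by (rule sum)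
    show "G1 (w + t) = - exp (of_int n / 2 * t) / \<kappa>1 * exp (-w) * G1 w" for w
      unfolding G1_def by (rule Gshift[OF et hq1 q0 k1])
    show "G2 (w + t) = - exp (of_int m / 2 * t) / \<kappa>2 * exp (-w) * G2 w" for w
      unfolding G2_def by (rule Gshift[OF et hq1 q0 k2])
    show "G3 (w + t) = - exp (of_int l / 2 * t) / \<kappa>3 * exp (-w) * G3 w" for w
      unfolding G3_def by (rule Gshift[OF et hq1 q0 k3])
    show "G4 (w + t) = - exp (of_int k / 2 * t) / \<kappa>4 * exp (-w) * G4 w" for w
      unfolding G4_def by (rule Gshift[OF et hq1 q0 k4])
    show "G1 (w + 2 * of_real pi * \<i>) = (if even n then 1 else -1) * G1 w" for w
      unfolding G1_def by (rule Gper)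
    show "G2 (w + 2 * of_real pi * \<i>) = (if even m then 1 else -1) * G2 w" for w
      unfolding G2_def by (rule Gper)
    show "G3 (w + 2 * of_real pi * \<i>) = (if even l then 1 else -1) * G3 w" for w
      unfolding G3_def by (rule Gper)
    show "G4 (w + 2 * of_real pi * \<i>) = (if even k then 1 else -1) * G4 w" for w
      unfolding G4_def by (rule Gper)
    show "- exp (of_int n / 2 * t) / \<kappa>1 = - exp (of_int m / 2 * t) / \<kappa>2 \<Longrightarrow>
      (1 + (if even n then 1 else - 1)) * (1 + (if even m then 1 else - 1)) = (0::complex) \<and>
      (1 - (if even n then 1 else - 1)) * (1 - (if even m then 1 else - 1)) = (0::complex)"
      unfolding c1 c2 using PE[of "-1" 1 "n - 2*N" "m - 2*M"] by auto
    show "- exp (of_int n / 2 * t) / \<kappa>1 = - exp (of_int l / 2 * t) / \<kappa>3 \<Longrightarrow>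
      (1 + (if even n then 1 else - 1)) * (1 + (if even l then 1 else - 1)) = (0::complex) \<and>
      (1 - (if even n then 1 else - 1)) * (1 - (if even l then 1 else - 1)) = (0::complex)"
    proof -
      assume "- exp (of_int n / 2 * t) / \<kappa>1 = - exp (of_int l / 2 * t) / \<kappa>3"
      hence "n - 2*N = l - 2*L - 1" unfolding c1 c3 using PE[of "-1" "-1" "n - 2*N" "l - 2*L - 1"] by auto
      hence "even n \<longleftrightarrow> \<not> even l" by presburger
      thus ?thesis by auto
    qed
    show "- exp (of_int n / 2 * t) / \<kappa>1 = - exp (of_int k / 2 * t) / \<kappa>4 \<Longrightarrow>
      (1 + (if even n then 1 else - 1)) * (1 + (if even k then 1 else - 1)) = (0::complex) \<and>
      (1 - (if even n then 1 else - 1)) * (1 - (if even k then 1 else - 1)) = (0::complex)"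
      unfolding c1 c4 using PE[of "-1" 1 "n - 2*N" "k - 2*K - 1"] by auto
    show "- exp (of_int m / 2 * t) / \<kappa>2 = - exp (of_int l / 2 * t) / \<kappa>3 \<Longrightarrow>
      (1 + (if even m then 1 else - 1)) * (1 + (if even l then 1 else - 1)) = (0::complex) \<and>
      (1 - (if even m then 1 else - 1)) * (1 - (if even l then 1 else - 1)) = (0::complex)"
      unfolding c2 c3 using PE[of 1 "-1" "m - 2*M" "l - 2*L - 1"] by auto
    show "- exp (of_int m / 2 * t) / \<kappa>2 = - exp (of_int k / 2 * t) / \<kappa>4 \<Longrightarrow>
      (1 + (if even m then 1 else - 1)) * (1 + (if even k then 1 else - 1)) = (0::complex) \<and>
      (1 - (if even m then 1 else - 1)) * (1 - (if even k then 1 else - 1)) = (0::complex)"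
    proof -
      assume "- exp (of_int m / 2 * t) / \<kappa>2 = - exp (of_int k / 2 * t) / \<kappa>4"
      hence "m - 2*M = k - 2*K - 1" unfolding c2 c4 using PE[of 1 1 "m - 2*M" "k - 2*K - 1"] by auto
      hence "even m \<longleftrightarrow> \<not> even k" by presburger
      thus ?thesis by auto
    qed
    show "- exp (of_int l / 2 * t) / \<kappa>3 = - exp (of_int k / 2 * t) / \<kappa>4 \<Longrightarrow>
      (1 + (if even l then 1 else - 1)) * (1 + (if even k then 1 else - 1)) = (0::complex) \<and>
      (1 - (if even l then 1 else - 1)) * (1 - (if even k then 1 else - 1)) = (0::complex)"
      unfolding c3 c4 using PE[of "-1" 1 "l - 2*L - 1" "k - 2*K - 1"] by auto
  qed
  define x0 :: complex where "x0 = of_real (sqrt (norm q))"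
  have x0: "x0 \<noteq> 0" using hq0 by (simp add: x0_def)
  have th: "jtheta q x0 \<noteq> 0" unfolding x0_def by (rule jtheta_nonzero[OF hq1 q0])
  have zero: "Z = 0" if "\<kappa> \<noteq> 0" "\<And>w. Z * exp (of_int j / 2 * w) * jtheta q (\<kappa> * exp w) = 0"
    for Z \<kappa> :: complex and j :: int
  proof -
    have "exp (Ln (x0 / \<kappa>)) = x0 / \<kappa>" using x0 that(1) by simp
    hence "\<kappa> * exp (Ln (x0 / \<kappa>)) = x0" using that(1) by simp
    with that(2)[of "Ln (x0 / \<kappa>)"] th show ?thesis by simp
  qed
  show ?thesis
    using zero[OF k1, of A n] zero[OF k2, of B m] zero[OF k3, of C l] zero[OF k4, of D k]
      all unfolding G1_def G2_def G3_def G4_def by blast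
qed

end
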